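(* Let $P\subseteq\mathbb{R}^d$ be a $d$-dimensional polytope and let $v_1,\dots,v_k$ be Fine core normals of $P$. Let $v=\sum_{i=1}^k\lambda_i v_i\in(\mathbb{Z}^d)^*$ with $\lambda_1,\dots,\lambda_k\ge 0$, $\sum_{i=1}^k\lambda_i\le 1$ and $v\neq 0$. Then $v$ is also a Fine core normal of $P$.
   Context: For a $d$-dimensional rational polytope $P\subseteq\mathbb{R}^d$ and $a\in(\mathbb{Z}^d)^*$ let $h_P(a)=\min_{x\in P}\langle a,x\rangle$. For $s>0$ the Fine adjoint polytope is $P^{F(s)}=\{x\in\mathbb{R}^d : \langle a,x\rangle\ge h_P(a)+s \text{ for all } a\in(\mathbb{Z}^d)^*\setminus\{0\}\}$. The Fine $\mathbb{Q}$-codegree is $\mu^F(P)=(\sup\{s>0 : P^{F(s)}\neq\emptyset\})^{-1}$, the Fine number is $n^F(P)=1/\mu^F(P)$, and the Fine core is $\operatorname{core}^F(P)=P^{F(n^F(P))}$. A Fine core normal of $P$ is a nonzero $a\in(\mathbb{Z}^d)^*$ with $\langle a,y\rangle=h_P(a)+n^F(P)$ for all $y\in\operatorname{core}^F(P)$. *)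

theory Defs
  imports "HOL-Analysis.Analysis"
begin

text \<open>Integer (dual) lattice vectors (Z^d)^*, identified with integer vectors in R^d via the
  standard inner product.\<close>
definition int_vec :: "real^'n \<Rightarrow> bool" where
  "int_vec a \<longleftrightarrow> (\<forall>i. a $ i \<in> \<int>)"

definition support_h :: "(real^'n) set \<Rightarrow> real^'n \<Rightarrow> real" where
  "support_h P a = Inf ((\<lambda>x. a \<bullet> x) ` P)"

definition fine_adjoint :: "(real^'n) set \<Rightarrow> real \<Rightarrow> (real^'n) set" where
  "fine_adjoint P s = {x. \<forall>a. int_vec a \<and> a \<noteq> 0 \<longrightarrow> a \<bullet> x \<ge> support_h P a + s}"

definition fine_codegree :: "(real^'n) set \<Rightarrow> real" where
  "fine_codegree P = inverse (Sup {s. s > 0 \<and> fine_adjoint P s \<noteq> {}})"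

definition fine_number :: "(real^'n) set \<Rightarrow> real" where
  "fine_number P = 1 / fine_codegree P"

definition fine_core :: "(real^'n) set \<Rightarrow> (real^'n) set" where
  "fine_core P = fine_adjoint P (fine_number P)"

definition fine_core_normal :: "(real^'n) set \<Rightarrow> real^'n \<Rightarrow> bool" where
  "fine_core_normal P a \<longleftrightarrow> int_vec a \<and> a \<noteq> 0 \<and>
     (\<forall>y\<in>fine_core P. a \<bullet> y = support_h P a + fine_number P)"

end

theory Submission
  imports Defs
begin

lemma const_zero:
  fixes P :: "(real^'n) set" and a :: "real^'n"
  assumes "aff_dim P = int CARD('n)" and "\<And>x. x \<in> P \<Longrightarrow> a \<bullet> x = c"
  shows "a = 0"
proof -
  have "affine hull P = UNIV" using assms(1) aff_dim_eq_full[where S=P] by simp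
  moreover have "affine hull P \<subseteq> {x. a \<bullet> x = c}"
    by (rule hull_minimal) (use assms(2) affine_hyperplane in auto)
  ultimately have h: "\<And>x. a \<bullet> x = c" by auto
  have "c = 0" using h[of 0] by simp
  then have "a \<bullet> a = 0" using h[of a] by simp
  then show ?thesis by simp
qed

theorem mainTheorem3:
  fixes P :: "(real^'n) set" and k :: nat
    and vs :: "nat \<Rightarrow> real^'n" and lam :: "nat \<Rightarrow> real"
  assumes "polytope P" and "aff_dim P = int CARD('n)"
    and "\<And>i. i < k \<Longrightarrow> fine_core_normal P (vs i)"
    and "\<And>i. i < k \<Longrightarrow> lam i \<ge> 0"
    and "(\<Sum>i<k. lam i) \<le> 1"
    and "int_vec (\<Sum>i<k. lam i *\<^sub>R vs i)"
    and "(\<Sum>i<k. lam i *\<^sub>R vs i) \<noteq> 0"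
  shows "fine_core_normal P (\<Sum>i<k. lam i *\<^sub>R vs i)"
proof -
  define v where "v = (\<Sum>i<k. lam i *\<^sub>R vs i)"
  define n where "n = fine_number P"
  have Pne: "P \<noteq> {}" using assms(2) by auto
  have cP: "compact P" using assms(1) polytope_imp_compact by blast
  have bdd: "bdd_below ((\<lambda>x. a \<bullet> x) ` P)" for a :: "real^'n"
  proof -
    have "compact ((\<lambda>x. a \<bullet> x) ` P)"
      by (rule compact_continuous_image[OF _ cP]) (intro continuous_intros)
    then show ?thesis by (simp add: compact_imp_bounded bounded_imp_bdd_below)
  qed
  have hle: "support_h P a \<le> a \<bullet> x" if "x \<in> P" for a x
    unfolding support_h_def by (rule cInf_lower) (use that bdd in auto)
  have superadd: "(\<Sum>i<k. lam i * support_h P (vs i)) \<le> support_h P v"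
    unfolding support_h_def[of P v]
  proof (rule cInf_greatest)
    show "(\<lambda>x. v \<bullet> x) ` P \<noteq> {}" using Pne by auto
    fix m assume "m \<in> (\<lambda>x. v \<bullet> x) ` P"
    then obtain x where x: "x \<in> P" "m = v \<bullet> x" by auto
    have "m = (\<Sum>i<k. lam i * (vs i \<bullet> x))"
      unfolding x(2) v_def by (simp add: inner_sum_left)
    moreover have "(\<Sum>i<k. lam i * support_h P (vs i)) \<le> (\<Sum>i<k. lam i * (vs i \<bullet> x))"
      by (rule sum_mono) (use assms(4) hle[OF x(1)] in \<open>auto intro: mult_left_mono\<close>)
    ultimately show "(\<Sum>i<k. lam i * support_h P (vs i)) \<le> m" by simp
  qed
  have eq: "v \<bullet> y = support_h P v + n" if y: "y \<in> fine_core P" for y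
  proof -
    have ge: "v \<bullet> y \<ge> support_h P v + n"
      using y assms(6,7) unfolding fine_core_def fine_adjoint_def v_def n_def by auto
    have vi: "vs i \<bullet> y = support_h P (vs i) + n" if "i < k" for i
      using assms(3)[OF that] y unfolding fine_core_normal_def n_def by auto
    have "v \<bullet> y = (\<Sum>i<k. lam i * (vs i \<bullet> y))"
      unfolding v_def by (simp add: inner_sum_left)
    also have "\<dots> = (\<Sum>i<k. lam i * support_h P (vs i)) + (\<Sum>i<k. lam i) * n"
      by (simp add: vi distrib_left sum.distrib sum_distrib_right)
    finally have vy: "v \<bullet> y = (\<Sum>i<k. lam i * support_h P (vs i)) + (\<Sum>i<k. lam i) * n" .
    have npos: "n > 0"
    proof (rule ccontr)
      assume "\<not> n > 0"
      then have "P \<subseteq> fine_core P"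
        unfolding fine_core_def fine_adjoint_def n_def[symmetric]
        using hle by (auto, smt (verit) hle)
      have "k > 0" using assms(7) by (cases k) auto
      then have "vs 0 = 0"
        using const_zero[OF assms(2), of "vs 0" "support_h P (vs 0) + n"]
          \<open>P \<subseteq> fine_core P\<close> assms(3)[of 0] unfolding fine_core_normal_def n_def by auto
      then show False using assms(3)[of 0] \<open>k > 0\<close> unfolding fine_core_normal_def by auto
    qed
    have "(\<Sum>i<k. lam i) * n \<le> n" using assms(5) npos by (simp add: mult_le_cancel_right1)
    then have "v \<bullet> y \<le> support_h P v + n" using vy superadd by linarith
    then show ?thesis using ge by linarith
  qed
  show ?thesis
    unfolding fine_core_normal_def using eq assms(6,7) unfolding v_def n_def by auto
qed

end
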